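(* Let $k$ be odd, $n=4k$, $d=\frac{(3^{2k}+1)^2}{20}$, let $a\in\mathrm{GF}(3^n)^*$ be nonzero, and let $r$ be a nonsquare in $\mathrm{GF}(3^4)^*$. Then the equation $$(ar)^{3^{2(k+1)}}y^{81}-(r^{d}+r^{9d})y^9+ary=0$$ has $y=0$ as its only solution in $\mathrm{GF}(3^n)$.
   Context: $\mathrm{GF}(3^4)$ is regarded as a subfield of $\mathrm{GF}(3^n)$ (since $4\mid n$). *)

theory Defs
  imports Main "HOL-Library.Cardinality"
begin

text \<open>The copy of GF(3^4) inside a finite field F of order 3^n (4 divides n)
is the set of fixed points of the 4th power of Frobenius, x \<mapsto> x^81.\<close>
definition GF81 :: "'a::field set" where
  "GF81 = {x. x ^ 81 = x}"

end

theory Submission imports Defs "HOL-Number_Theory.Residues" begin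


definition rta :: "'a::field ring"
  where "rta = \<lparr> carrier = UNIV, monoid.mult = (\<lambda>x y. x * y), one = 1, ring.zero = 0, add = (\<lambda> x y. x + y) \<rparr>"

lemma field_rta: "field (rta :: 'a::field ring)"
proof -
  have "\<exists>y. x + y = 0" for x :: 'a
    using add.right_inverse by blast
  moreover have "x \<noteq> 0 \<Longrightarrow> \<exists>y. x * y = 1" for x :: 'a
    by (rule exI[of _ "inverse x"]) auto
  ultimately show ?thesis
    unfolding rta_def using add.right_inverse
    by unfold_locales (auto simp:algebra_simps Units_def)
qed


lemma powR: "(x::'a::field) [^]\<^bsub>rta\<^esub> (n::nat) = x ^ n"
proof -
  interpret R: field "rta :: 'a ring" by (rule field_rta)
  show ?thesis
    by (induction n) (auto simp: rta_def)
qed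

lemma cyclic:
  "\<exists>g::'a::{field,finite}. (\<forall>x. x \<noteq> 0 \<longrightarrow> (\<exists>i. x = g^i)) \<and> (\<forall>i. g^i = 1 \<longleftrightarrow> (CARD('a)-1) dvd i)"
proof -
  define R where "R = (rta :: 'a ring)"
  interpret R: field R unfolding R_def by (rule field_rta)
  have cR: "carrier R = UNIV" by (simp add: R_def rta_def)
  have fin: "finite (carrier R)" by (simp add: cR)
  interpret G: group "mult_of R" by (rule R.field_mult_group)
  obtain a where a: "a \<in> carrier (mult_of R)" and gen: "carrier (mult_of R) = {a[^]\<^bsub>R\<^esub>i | i::nat . i \<in> UNIV}"
    using R.finite_field_mult_group_has_gen[OF fin] by auto
  have pw: "a [^]\<^bsub>mult_of R\<^esub> (n::nat) = a ^ n" for n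
    by (simp add: nat_pow_mult_of R_def powR)
  have ordg: "G.ord a = CARD('a) - 1"
  proof -
    have "G.ord a = card (generate (mult_of R) {a})" by (rule G.generate_pow_card[OF a])
    also have "generate (mult_of R) {a} = carrier (mult_of R)"
      using G.generate_pow_on_finite_carrier[OF _ a] gen fin by (simp add: nat_pow_mult_of)
    also have "card (carrier (mult_of R)) = order (mult_of R)" by (simp add: order_def)
    also have "\<dots> = CARD('a) - 1" using R.order_mult_of[OF fin] by (simp add: order_def cR)
    finally show ?thesis .
  qed
  have one: "\<one>\<^bsub>mult_of R\<^esub> = (1::'a)" by (simp add: R_def rta_def)
  show ?thesis
  proof (intro exI[of _ a] conjI allI impI)
    fix x :: 'a assume "x \<noteq> 0"
    then have "x \<in> carrier (mult_of R)" by (simp add: cR R_def rta_def)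
    then have "x \<in> {a[^]\<^bsub>R\<^esub>i | i::nat . i \<in> UNIV}" unfolding gen .
    then obtain i::nat where "x = a [^]\<^bsub>R\<^esub> i" by blast
    then show "\<exists>i. x = a ^ i" using pw by (auto simp: nat_pow_mult_of)
  next
    fix i
    show "a ^ i = 1 \<longleftrightarrow> (CARD('a)-1) dvd i"
      using G.pow_eq_id[OF a, of i] pw one ordg by simp
  qed
qed
lemma pm: "(a::nat)^j mod m = (a mod m)^j mod m" by (rule power_mod[symmetric])

lemma arA: assumes "odd (k::nat)" shows "(3^(2*k)+1)^2 div 20 mod 80 = (5::nat)"
proof -
  obtain j where k: "k = 2*j+1" using assms oddE by blast
  have "(81::nat)^j mod 80 = 1" by (subst pm) simp
  then obtain t where t: "(81::nat)^j = 80*t+1" by (metis div_mod_decomp add.commute mult.commute)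
  have "(3::nat)^(2*k) = 9*81^j" by (simp add: k power_mult power_add)
  also have "\<dots> = 720*t+9" by (simp add: t)
  finally have e: "(3::nat)^(2*k)+1 = 10*(72*t+1)" by simp
  have "(10*(72*t+1))^2 = 20*(5*(72*t+1)^2)" by (simp add: power2_eq_square algebra_simps)
  then have "(3^(2*k)+1)^2 div 20 = 5*(72*t+1)^2" unfolding e by simp
  also have "\<dots> = 80*(324*t*t+9*t) + 5" by (simp add: power2_eq_square algebra_simps)
  finally have "(3^(2*k)+1)^2 div 20 = 80*(324*t*t+9*t) + (5::nat)" .
  moreover have "\<forall>X::nat. (80*X+5) mod 80 = 5" by simp
  ultimately show ?thesis by metis
qed

lemma arB: "(80::nat) dvd 81^k - 1"
proof -
  have "(81::nat)^k mod 80 = 1" by (subst pm) simp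
  then obtain t where t: "(81::nat)^k = 80*t+1" by (metis div_mod_decomp add.commute mult.commute)
  then show ?thesis by simp
qed

lemma arC: assumes "odd (k::nat)" shows "\<exists>M. odd M \<and> (81::nat)^k - 1 = 16*M"
proof -
  obtain j where k: "k = 2*j+1" using assms oddE by blast
  have "(6561::nat)^j mod 32 = 1" by (subst pm) simp
  then obtain t where t: "(6561::nat)^j = 32*t+1" by (metis div_mod_decomp add.commute mult.commute)
  have "(81::nat)^k = 81 * 6561^j" by (simp add: k power_mult power_add)
  also have "\<dots> = 16*(162*t+5)+1" by (simp add: t)
  finally show ?thesis by (intro exI[of _ "162*t+5"]) simp
qed

lemma arD: "(80::nat) dvd 3^(2*(2*j+2)) - 1"
proof -
  have e: "2*(2*j+2) = 4*(j+1)" by simp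
  have "(3::nat)^(2*(2*j+2)) = (3^4)^(j+1)" unfolding e by (rule power_mult)
  then have "(3::nat)^(2*(2*j+2)) = 81^(j+1)" by simp
  then show ?thesis by (simp only: arB)
qed
theorem lemma4:
  fixes k :: nat and a r y :: "'a::{field,finite}"
  assumes "odd k"
    and "CARD('a) = 3 ^ (4 * k)"
    and "a \<noteq> 0"
    and "r \<in> GF81" and "r \<noteq> 0"
    and "\<not> (\<exists>s\<in>GF81. s ^ 2 = r)"
    and "(a * r) ^ (3 ^ (2 * (k + 1))) * y ^ 81
           - (r ^ ((3 ^ (2 * k) + 1)\<^sup>2 div 20) + r ^ (9 * ((3 ^ (2 * k) + 1)\<^sup>2 div 20))) * y ^ 9
           + a * r * y = 0"
  shows "y = 0"
proof (rule ccontr)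
  assume y0: "y \<noteq> 0"
  define N where "N = CARD('a) - 1"
  have N81: "N = 81^k - 1" unfolding N_def assms(2) by (simp add: power_mult)
  obtain g :: 'a where gen: "\<And>x. x \<noteq> 0 \<Longrightarrow> \<exists>i. x = g^i"
    and gord: "\<And>i. g^i = 1 \<longleftrightarrow> N dvd i"
    using cyclic unfolding N_def by blast
  have fermat: "x ^ (N * t) = 1" if x0: "x \<noteq> 0" for x :: 'a and t
  proof -
    obtain i where "x = g^i" using gen x0 by blast
    then have "x ^ (N*t) = g^(i*(N*t))" by (simp add: power_mult)
    also have "\<dots> = 1" using gord by simp
    finally show ?thesis .
  qed
  obtain P where P: "N = 80*P" using arB N81 by (metis dvdE)
  have r81: "r^81 = r" using assms(4) by (simp add: GF81_def)
  have r80: "r^80 = 1"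
  proof -
    have "r * r^80 = r * 1" using r81 by (simp add: power_Suc[symmetric])
    then show ?thesis using assms(5) by simp
  qed
  define d where "d = (3 ^ (2 * k) + 1)\<^sup>2 div (20::nat)"
  have dm: "d mod 80 = 5" unfolding d_def using arA[OF assms(1)] .
  have rmod: "r^m = r^(m mod 80)" for m
  proof -
    have "r^m = r^(80*(m div 80) + m mod 80)" by simp
    also have "\<dots> = (r^80)^(m div 80) * r^(m mod 80)" by (simp only: power_add power_mult)
    finally show ?thesis using r80 by simp
  qed
  have rd: "r^d = r^5" using rmod[of d] dm by simp
  have "9*d mod 80 = 45" using dm by (simp add: mod_mult_right_eq[of 9 d 80, symmetric])
  then have r9d: "r^(9*d) = r^45" using rmod[of "9*d"] by simp
  have r40: "r^40 \<noteq> 1"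
  proof
    assume h: "r^40 = 1"
    obtain j where j: "r = g^j" using gen assms(5) by blast
    have "g^(40*j) = 1" using h j by (simp add: power_mult[symmetric] mult.commute)
    then have "N dvd 40*j" using gord by blast
    then have "80*P dvd 40*j" using P by simp
    then have "40*(2*P) dvd 40*j" by simp
    then have "2*P dvd j" by (simp add: nat_mult_dvd_cancel_disj)
    then obtain t where t: "j = 2*P*t" by (rule dvdE)
    define s where "s = g^(P*t)"
    have "s^2 = r" unfolding s_def j t by (simp add: power_mult[symmetric] ac_simps)
    moreover have "s^81 = s"
    proof -
      have "s^80 = 1" unfolding s_def using gord[of "80*(P*t)"] P
        by (simp add: power_mult[symmetric] mult.commute)
      moreover have "s^81 = s^80 * s" by (simp add: power_Suc2[symmetric])
      ultimately show ?thesis by simp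
    qed
    ultimately show False using assms(6) by (auto simp: GF81_def)
  qed
  have r40m: "r^40 = -1"
  proof -
    have "(r^40 - 1) * (r^40 + 1) = 0"
      using r80 by (simp add: algebra_simps power_mult[symmetric] power2_eq_square[symmetric] power_add[symmetric])
    then show ?thesis using r40 by (simp add: eq_neg_iff_add_eq_0)
  qed
  have r45: "r^45 = -(r^5)"
  proof -
    have "r^45 = r^40 * r^5" by (simp add: power_add[symmetric])
    then show ?thesis using r40m by simp
  qed
  define b where "b = a * r"
  have b0: "b \<noteq> 0" using assms(3,5) by (simp add: b_def)
  define q where "q = 3 ^ (2 * (k + 1)) - (1::nat)"
  have qq: "(3::nat) ^ (2 * (k + 1)) = q + 1" unfolding q_def by simp
  have eq: "b ^ (q+1) * y ^ 81 + b * y = 0"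
    using assms(7) unfolding d_def[symmetric] rd r9d r45 b_def qq by simp
  have key: "b^q * y^80 = -1"
  proof -
    have y81: "y^81 = y^80 * y" by (simp add: power_Suc2[symmetric])
    have bq: "b^(q+1) = b^q * b" by simp
    have "(b^q * y^80 + 1) * (b * y) = b^(q+1) * y^81 + b * y" unfolding y81 bq
      by (simp only: distrib_right distrib_left mult_1_left mult.assoc mult.left_commute)
    then have "(b^q * y^80 + 1) * (b * y) = 0" using eq by simp
    then show ?thesis using b0 y0 by (simp add: eq_neg_iff_add_eq_0)
  qed
  obtain M :: nat where M: "odd M" "81^k - 1 = 16*M" using arC[OF assms(1)] by blast
  obtain u :: nat where u: "q = 80*u"
  proof -
    obtain j where "k = 2*j+1" using assms(1) oddE by blast
    then have "(80::nat) dvd q" unfolding q_def using arD[of j] by (simp only: add.assoc one_add_one)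
    then show ?thesis using that by (metis dvdE)
  qed
  have "(b^q * y^80)^M = (-1)^M" by (simp only: key)
  also have "\<dots> = -1" using M(1) by simp
  finally have m1: "(b^q * y^80)^M = -1" .
  moreover have "(b^q * y^80)^M = 1"
  proof -
    have NM: "N = 16*M" using M(2) N81 by simp
    have e1: "q*M = N*(5*u)" unfolding NM u by simp
    have e2: "80*M = N*5" unfolding NM by simp
    have "(b^q)^M = b^(N*(5*u))" by (simp only: power_mult[symmetric] e1)
    moreover have "(y^80)^M = y^(N*5)" by (simp only: power_mult[symmetric] e2)
    moreover have "b^(N*(5*u)) = 1" by (rule fermat[OF b0])
    moreover have "y^(N*5) = 1" by (rule fermat[OF y0])
    ultimately show ?thesis by (simp only: power_mult_distrib mult_1_left)
  qed
  with m1 have "(1::'a) = -1" by simp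
  then have "of_nat 2 = (0::'a)" by (simp add: eq_neg_iff_add_eq_0)
  then have c2: "CHAR('a) dvd 2" by (simp only: of_nat_eq_0_iff_char_dvd)
  have "CHAR('a) dvd 3^(4*k)" using CHAR_dvd_CARD[where 'a='a] assms(2) by simp
  moreover have "CHAR('a) = 2"
  proof -
    have "CHAR('a) \<le> 2" "CHAR('a) \<noteq> 0" using c2 by (auto dest: dvd_imp_le intro: gr0I)
    moreover have "CHAR('a) \<noteq> 1" by simp
    ultimately show ?thesis by linarith
  qed
  ultimately show False by simp
qed
end
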